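(* For $s_1,s_2\in\mathbb{Z}_{\ge0}$ and integers $n_1,n_2\ge1$: \begin{align*} ((\mathcal{T}*\phi)^{n_2-n_1}*\mathcal{T})(s_2,s_1)&=\Gamma(n_1,-\tfrac12,s_1;n_2,\tfrac12,s_2)\quad(n_1\le n_2),\\ (\mathcal{T}*\phi)^{n_2-n_1}(s_2,s_1)&=\Gamma(n_1,\tfrac12,s_1;n_2,\tfrac12,s_2)\quad(n_1<n_2),\\ ((\phi*\mathcal{T})^{n_2-n_1-1}*\phi)(s_2,s_1)&=\Gamma(n_1,\tfrac12,s_1;n_2,-\tfrac12,s_2)\quad(n_1<n_2),\\ (\phi*\mathcal{T})^{n_2-n_1}(s_2,s_1)&=\Gamma(n_1,-\tfrac12,s_1;n_2,-\tfrac12,s_2)\quad(n_1<n_2). \end{align*}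
   Context: Matrices on $\mathbb{Z}_{\ge0}\times\mathbb{Z}_{\ge0}$: $\mathcal{T}(x,y)=0$ if $x<y$, $1$ if $x\ge y=0$, $2$ if $x\ge y>0$; $\phi(x,y)=1$ if $x>y$, $0$ otherwise; $(f*g)(x,y)=\sum_{z\ge0}f(x,z)g(z,y)$, and the $0$-th power is the identity. $\mathsf{J}^{(-1/2,-1/2)}_s(\cos\theta)=\cos s\theta$, $\mathsf{J}^{(1/2,-1/2)}_s(\cos\theta)=\sin((s+\frac12)\theta)/\sin(\theta/2)$; $W^{(-1/2,-1/2)}(0)=1$, $W^{(-1/2,-1/2)}(s)=2$ ($s>0$), $W^{(1/2,-1/2)}\equiv1$. For $a_1,a_2\in\{\pm\frac12\}$ with $2n_1+a_1<2n_2+a_2$, \[\Gamma(n_1,a_1,s_1;n_2,a_2,s_2)=-\frac{W^{(a_1,-1/2)}(s_1)}{\pi}\frac1{2\pi i}\int_{-1}^1\oint\mathsf{J}^{(a_1,-1/2)}_{s_1}(x)\mathsf{J}^{(a_2,-1/2)}_{s_2}(u)(u-1)^{n_1-n_2}\frac{(1-x)^{a_1}(1+x)^{-1/2}}{x-u}\,du\,dx,\] where the $u$-contour is a positively oriented simple loop containing $[-1,1]$. *)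

theory Defs
  imports "HOL-Complex_Analysis.Complex_Analysis" "HOL-Computational_Algebra.Polynomial"
begin

definition matT :: "nat \<Rightarrow> nat \<Rightarrow> real" where
  "matT x y = (if x < y then 0 else if y = 0 then 1 else 2)"

definition matPhi :: "nat \<Rightarrow> nat \<Rightarrow> real" where
  "matPhi x y = (if x > y then 1 else 0)"

definition mconv :: "(nat \<Rightarrow> nat \<Rightarrow> real) \<Rightarrow> (nat \<Rightarrow> nat \<Rightarrow> real) \<Rightarrow> nat \<Rightarrow> nat \<Rightarrow> real" where
  "mconv f g x y = (\<Sum>\<^sub>\<infinity> z\<in>(UNIV::nat set). f x z * g z y)"

definition midentity :: "nat \<Rightarrow> nat \<Rightarrow> real" where
  "midentity x y = (if x = y then 1 else 0)"

fun mpow :: "(nat \<Rightarrow> nat \<Rightarrow> real) \<Rightarrow> nat \<Rightarrow> nat \<Rightarrow> nat \<Rightarrow> real" where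
  "mpow f 0 = midentity"
| "mpow f (Suc n) = mconv (mpow f n) f"

text \<open>Jacobi polynomials J^{(a,-1/2)}_s for a = -1/2 (Chebyshev first kind) and a = 1/2,
  defined as the polynomial determined by its values at cos theta.\<close>

definition jac_poly :: "real \<Rightarrow> nat \<Rightarrow> complex poly" where
  "jac_poly a s = (if a = -1/2
     then (THE p. \<forall>\<theta>::real. poly p (complex_of_real (cos \<theta>)) = complex_of_real (cos (real s * \<theta>)))
     else (THE p. \<forall>\<theta>::real. sin (\<theta>/2) \<noteq> 0 \<longrightarrow>
             poly p (complex_of_real (cos \<theta>)) = complex_of_real (sin ((real s + 1/2) * \<theta>) / sin (\<theta>/2))))"

definition J :: "real \<Rightarrow> nat \<Rightarrow> complex \<Rightarrow> complex" where
  "J a s z = poly (jac_poly a s) z"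

definition Wt :: "real \<Rightarrow> nat \<Rightarrow> real" where
  "Wt a s = (if a = -1/2 then (if s = 0 then 1 else 2) else 1)"

definition good_loop :: "(real \<Rightarrow> complex) \<Rightarrow> bool" where
  "good_loop \<gamma> \<longleftrightarrow> valid_path \<gamma> \<and> simple_path \<gamma> \<and> pathfinish \<gamma> = pathstart \<gamma> \<and>
     (\<forall>x::real\<in>{-1..1}. complex_of_real x \<notin> path_image \<gamma> \<and>
        winding_number \<gamma> (complex_of_real x) = 1)"

definition Gam :: "(real \<Rightarrow> complex) \<Rightarrow> nat \<Rightarrow> real \<Rightarrow> nat \<Rightarrow> nat \<Rightarrow> real \<Rightarrow> nat \<Rightarrow> complex" where
  "Gam \<gamma> n1 a1 s1 n2 a2 s2 =
     - complex_of_real (Wt a1 s1 / pi) * (1 / (2 * complex_of_real pi * \<i>)) *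
     integral {-1..1::real} (\<lambda>x. contour_integral \<gamma> (\<lambda>u.
        J a1 s1 (complex_of_real x) * J a2 s2 u * (u - 1) powi (int n1 - int n2) *
        complex_of_real ((1 - x) powr a1 * (1 + x) powr (-1/2)) / (complex_of_real x - u)))"

end

theory Submission
  imports Defs
begin

lemma gl_facts:
  assumes "good_loop \<gamma>" and "x \<in> {-1..1}"
  shows "valid_path \<gamma>" "pathfinish \<gamma> = pathstart \<gamma>"
        "complex_of_real x \<notin> path_image \<gamma>" "winding_number \<gamma> (complex_of_real x) = 1"
  using assms unfolding good_loop_def by auto

lemma cif_poly:
  assumes "good_loop \<gamma>" and "x \<in> {-1..1}"
  shows "((\<lambda>u. poly q u / (u - complex_of_real x)) has_contour_integral (2*pi*\<i> * poly q (complex_of_real x))) \<gamma>"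
proof -
  have "((\<lambda>u. poly q u / (u - complex_of_real x)) has_contour_integral
      (2*pi*\<i> * winding_number \<gamma> (complex_of_real x) * poly q (complex_of_real x))) \<gamma>"
    by (rule Cauchy_integral_formula_global[where S=UNIV])
       (use gl_facts[OF assms] in \<open>auto intro: poly_holomorphic_on\<close>)
  then show ?thesis using gl_facts[OF assms] by simp
qed

lemma ci_inv1:
  assumes "good_loop \<gamma>"
  shows "((\<lambda>u. (u - 1) powi (-1)) has_contour_integral (2*pi*\<i>)) \<gamma>"
proof -
  have "((\<lambda>u. poly 1 u / (u - complex_of_real 1)) has_contour_integral (2*pi*\<i> * poly 1 (complex_of_real 1))) \<gamma>"
    by (rule cif_poly[OF assms]) simp
  then show ?thesis by (simp add: power_int_minus divide_inverse)
qed

lemma ci_invk: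
  assumes "good_loop \<gamma>" and "k \<ge> 2"
  shows "((\<lambda>u. (u - 1) powi (-int k)) has_contour_integral 0) \<gamma>"
proof (rule Cauchy_theorem_primitive[where S="UNIV - {1}" and f="\<lambda>u. (u-1) powi (1 - int k) / of_int (1 - int k)"])
  fix u :: complex assume u: "u \<in> UNIV - {1}"
  show "((\<lambda>u. (u-1) powi (1 - int k) / of_int (1 - int k)) has_field_derivative (u - 1) powi (-int k)) (at u within UNIV - {1})"
    by (rule derivative_eq_intros refl | use u assms in simp)+
next
  show "valid_path \<gamma>" "pathfinish \<gamma> = pathstart \<gamma>" using gl_facts[OF assms(1), of 0] by auto
  show "path_image \<gamma> \<subseteq> UNIV - {1}" using gl_facts(3)[OF assms(1), of 1] by auto
qed

lemma ci_K:
  assumes "good_loop \<gamma>" and x: "x \<in> {-1..<1}"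
  shows "((\<lambda>u. (u - 1) powi (-int k) / (complex_of_real x - u)) has_contour_integral
           (if k = 0 then -(2*pi*\<i>) else 0)) \<gamma>"
proof (induction k)
  case 0
  have "((\<lambda>u. poly 1 u / (u - complex_of_real x)) has_contour_integral (2*pi*\<i> * poly 1 (complex_of_real x))) \<gamma>"
    by (rule cif_poly[OF assms(1)]) (use x in simp)
  then have "((\<lambda>u. - (poly 1 u / (u - complex_of_real x))) has_contour_integral -(2*pi*\<i> * poly 1 (complex_of_real x))) \<gamma>"
    by (rule has_contour_integral_neg)
  then have "((\<lambda>u. (u - 1) powi (-int 0) / (complex_of_real x - u)) has_contour_integral
           -(2*pi*\<i> * poly 1 (complex_of_real x))) \<gamma>"
    by (rule has_contour_integral_eq) (simp add: minus_divide_right)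
  then show ?case by simp
next
  case (Suc k)
  define z where "z = complex_of_real x"
  have z1: "z \<noteq> 1" using x unfolding z_def by auto
  have A: "((\<lambda>u. (u - 1) powi (-int (Suc k))) has_contour_integral (if k = 0 then 2*pi*\<i> else 0)) \<gamma>"
    using ci_inv1[OF assms(1)] ci_invk[OF assms(1), of "Suc k"] by (cases "k = 0") auto
  have B: "((\<lambda>u. (u - 1) powi (-int (Suc k)) + (u - 1) powi (-int k) / (z - u)) has_contour_integral
          ((if k = 0 then 2*pi*\<i> else 0) + (if k = 0 then -(2*pi*\<i>) else 0))) \<gamma>"
    using has_contour_integral_add[OF A Suc.IH] unfolding z_def .
  have C: "((\<lambda>u. ((u - 1) powi (-int (Suc k)) + (u - 1) powi (-int k) / (z - u)) / (z - 1)) has_contour_integral 0) \<gamma>"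
    using has_contour_integral_div[OF B, of "z - 1"] by (cases "k = 0") simp_all
  show ?case
  proof -
    have "((\<lambda>u. (u - 1) powi (-int (Suc k)) / (z - u)) has_contour_integral 0) \<gamma>"
    proof (rule has_contour_integral_eq[OF C])
      fix u assume u: "u \<in> path_image \<gamma>"
      have u1: "u \<noteq> 1" using gl_facts(3)[OF assms(1), of 1] u by auto
      have uz: "u \<noteq> z" using gl_facts(3)[OF assms(1), of x] x u unfolding z_def by auto
      have e: "(u - 1) powi (-int (Suc k)) = (u - 1) powi (-int k) / (u - 1)"
        using u1 by (simp add: power_int_minus power_int_diff field_simps)
      show "((u - 1) powi (-int (Suc k)) + (u - 1) powi (-int k) / (z - u)) / (z - 1) =
            (u - 1) powi (-int (Suc k)) / (z - u)"
      proof -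
        define P where "P = (u - 1) powi (-int k)"
        have n1: "u - 1 \<noteq> 0" "z - u \<noteq> 0" "z - 1 \<noteq> 0" using u1 uz z1 by auto
        have "P / (u - 1) + P / (z - u) = P * (z - 1) / ((u - 1) * (z - u))"
          using n1 by (simp add: field_simps)
        then show ?thesis unfolding e P_def[symmetric] using n1 by (simp add: divide_divide_eq_left mult.commute)
      qed
    qed
    then show ?thesis unfolding z_def by simp
  qed
qed

abbreviation "sdiv1 p \<equiv> synthetic_div p (1::complex)"

lemma ci_M:
  assumes "good_loop \<gamma>" and x: "x \<in> {-1..<1}"
  shows "((\<lambda>u. poly q u * (u - 1) powi (-int m) / (complex_of_real x - u)) has_contour_integral
           (-(2*pi*\<i>) * poly ((sdiv1 ^^ m) q) (complex_of_real x))) \<gamma>"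
proof (induction m arbitrary: q)
  case 0
  have "((\<lambda>u. poly q u / (u - complex_of_real x)) has_contour_integral (2*pi*\<i> * poly q (complex_of_real x))) \<gamma>"
    by (rule cif_poly[OF assms(1)]) (use x in simp)
  then have "((\<lambda>u. - (poly q u / (u - complex_of_real x))) has_contour_integral -(2*pi*\<i> * poly q (complex_of_real x))) \<gamma>"
    by (rule has_contour_integral_neg)
  then have "((\<lambda>u. poly q u * (u - 1) powi (-int 0) / (complex_of_real x - u)) has_contour_integral
           -(2*pi*\<i> * poly q (complex_of_real x))) \<gamma>"
    by (rule has_contour_integral_eq) (simp add: minus_divide_right)
  then show ?case by simp
next
  case (Suc m)
  define z where "z = complex_of_real x"
  have A: "((\<lambda>u. poly (sdiv1 q) u * (u - 1) powi (-int m) / (z - u)) has_contour_integral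
           (-(2*pi*\<i>) * poly ((sdiv1 ^^ m) (sdiv1 q)) z)) \<gamma>"
    using Suc.IH unfolding z_def .
  have B: "((\<lambda>u. poly q 1 * ((u - 1) powi (-int (Suc m)) / (z - u))) has_contour_integral 0) \<gamma>"
    using has_contour_integral_lmul[OF ci_K[OF assms, of "Suc m"], of "poly q 1"] unfolding z_def by simp
  have C: "((\<lambda>u. poly (sdiv1 q) u * (u - 1) powi (-int m) / (z - u) + poly q 1 * ((u - 1) powi (-int (Suc m)) / (z - u)))
       has_contour_integral (-(2*pi*\<i>) * poly ((sdiv1 ^^ Suc m) q) z)) \<gamma>"
  proof -
    have e: "(sdiv1^^Suc m) q = (sdiv1^^m) (sdiv1 q)" by (simp only: funpow_Suc_right comp_def)
    show ?thesis unfolding e using has_contour_integral_add[OF A B] by simp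
  qed
  show ?case unfolding z_def[symmetric]
  proof (rule has_contour_integral_eq[OF C])
    fix u assume u: "u \<in> path_image \<gamma>"
    have u1: "u \<noteq> 1" using gl_facts(3)[OF assms(1), of 1] u by auto
    have e: "(u - 1) powi (-int (Suc m)) = (u - 1) powi (-int m) / (u - 1)"
      using u1 by (simp add: power_int_minus power_int_diff field_simps)
    have q: "poly q u = (u - 1) * poly (sdiv1 q) u + poly q 1"
      using arg_cong[OF synthetic_div_correct'[of 1 q], of "\<lambda>p. poly p u"] by (simp add: algebra_simps)
    show "poly (sdiv1 q) u * (u - 1) powi (-int m) / (z - u) + poly q 1 * ((u - 1) powi (-int (Suc m)) / (z - u))
        = poly q u * (u - 1) powi (-int (Suc m)) / (z - u)"
    proof -
      define P where "P = (u - 1) powi (-int m)"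
      define a where "a = poly (sdiv1 q) u"
      have h: "(u - 1) * a * (P / (u - 1)) = a * P" using u1 by simp
      have "((u - 1) * a + poly q 1) * (P / (u - 1)) / (z - u) = a * P / (z - u) + poly q 1 * (P / (u - 1) / (z - u))"
        unfolding distrib_right h add_divide_distrib by simp
      then show ?thesis unfolding e q P_def[symmetric] a_def[symmetric] by (simp add: mult.assoc)
    qed
  qed
qed

fun cheb :: "nat \<Rightarrow> complex poly" where
  "cheb 0 = 1"
| "cheb (Suc 0) = [:0, 1:]"
| "cheb (Suc (Suc n)) = [:0, 2:] * cheb (Suc n) - cheb n"

lemma cheb_cos: "poly (cheb n) (complex_of_real (cos t)) = complex_of_real (cos (real n * t))"
proof (induction n rule: cheb.induct)
  case (3 n)
  have "cos (real (Suc (Suc n)) * t) = 2 * cos t * cos (real (Suc n) * t) - cos (real n * t)"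
  proof -
    have a: "real (Suc (Suc n)) * t = real (Suc n) * t + t" by (simp add: algebra_simps)
    have b: "real n * t = real (Suc n) * t - t" by (simp add: algebra_simps)
    show ?thesis unfolding a b cos_add cos_diff by simp
  qed
  then show ?case using 3 by simp
qed auto

definition ex :: "(nat \<Rightarrow> nat \<Rightarrow> real) \<Rightarrow> nat \<Rightarrow> complex poly" where
  "ex M s = (\<Sum>k\<le>s. smult (complex_of_real (M s k)) (cheb k))"

definition jp :: "nat \<Rightarrow> complex poly" where "jp s = ex matT s"

lemma sum_cos_id: "sin (t/2) * (1 + 2 * (\<Sum>k\<in>{1..s}. cos (real k * t))) = sin ((real s + 1/2) * t)"
proof (induction s)
  case 0 then show ?case by simp
next
  case (Suc s)
  have "sin (t/2) * (2 * cos (real (Suc s) * t)) = sin ((real (Suc s) + 1/2) * t) - sin ((real s + 1/2) * t)"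
  proof -
    have a: "(real (Suc s) + 1/2) * t = real (Suc s) * t + t/2" by (simp add: algebra_simps)
    have b: "(real s + 1/2) * t = real (Suc s) * t - t/2" by (simp add: algebra_simps)
    show ?thesis unfolding a b sin_add sin_diff by simp
  qed
  then show ?case using Suc by (simp add: algebra_simps)
qed

lemma poly_ex: "poly (ex M s) z = (\<Sum>k\<le>s. complex_of_real (M s k) * poly (cheb k) z)"
  unfolding ex_def by (simp add: poly_sum)

lemma jp_cos:
  assumes "sin (t/2) \<noteq> 0"
  shows "poly (jp s) (complex_of_real (cos t)) = complex_of_real (sin ((real s + 1/2) * t) / sin (t/2))"
proof -
  have "poly (jp s) (complex_of_real (cos t)) = complex_of_real (\<Sum>k\<le>s. matT s k * cos (real k * t))"
    unfolding jp_def poly_ex cheb_cos by simp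
  also have "(\<Sum>k\<le>s. matT s k * cos (real k * t)) = 1 + 2 * (\<Sum>k\<in>{1..s}. cos (real k * t))"
  proof -
    have "{..s} = insert 0 {1..s}" by auto
    then have "(\<Sum>k\<le>s. matT s k * cos (real k * t)) = matT s 0 * cos 0 + (\<Sum>k\<in>{1..s}. matT s k * cos (real k * t))"
      by (simp add: sum.insert)
    also have "(\<Sum>k\<in>{1..s}. matT s k * cos (real k * t)) = (\<Sum>k\<in>{1..s}. 2 * cos (real k * t))"
      by (rule sum.cong) (auto simp: matT_def)
    finally show ?thesis by (simp add: matT_def sum_distrib_left)
  qed
  also have "\<dots> = sin ((real s + 1/2) * t) / sin (t/2)"
    using sum_cos_id[of t s] assms by (simp add: field_simps)
  finally show ?thesis .
qed

lemma poly_eq_on_cos: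
  assumes "\<And>t. t \<in> {0<..<pi} \<Longrightarrow> poly p (complex_of_real (cos t)) = poly q (complex_of_real (cos t))"
  shows "p = q"
proof (rule ccontr)
  assume "p \<noteq> q"
  then have "finite {z. poly (p - q) z = 0}" by (intro poly_roots_finite) simp
  moreover have "complex_of_real ` {-1<..<1} \<subseteq> {z. poly (p - q) z = 0}"
  proof
    fix z assume "z \<in> complex_of_real ` {-1<..<1}"
    then obtain x where x: "x \<in> {-1<..<1}" "z = complex_of_real x" by auto
    have "arccos x \<in> {0<..<pi}" using x arccos_lt_bounded by auto
    moreover have "cos (arccos x) = x" using x by simp
    ultimately show "z \<in> {z. poly (p - q) z = 0}" using assms[of "arccos x"] x by auto
  qed
  ultimately have "finite (complex_of_real ` {-1<..<1::real})" by (rule finite_subset[rotated])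
  then have "finite {-1<..<1::real}" by (rule finite_imageD) (simp add: inj_on_def)
  then show False using infinite_Ioo[of "-1::real" 1] by simp
qed

lemma jac_cheb: "jac_poly (-1/2) s = cheb s"
  unfolding jac_poly_def
  by (simp, rule the_equality) (auto simp: cheb_cos intro!: poly_eq_on_cos)

lemma jac_jp: "jac_poly (1/2) s = jp s"
proof -
  have "(THE p. \<forall>\<theta>::real. sin (\<theta>/2) \<noteq> 0 \<longrightarrow>
             poly p (complex_of_real (cos \<theta>)) = complex_of_real (sin ((real s + 1/2) * \<theta>) / sin (\<theta>/2))) = jp s"
  proof (rule the_equality)
    show "\<forall>\<theta>::real. sin (\<theta>/2) \<noteq> 0 \<longrightarrow>
             poly (jp s) (complex_of_real (cos \<theta>)) = complex_of_real (sin ((real s + 1/2) * \<theta>) / sin (\<theta>/2))"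
      using jp_cos by blast
  next
    fix p assume h: "\<forall>\<theta>::real. sin (\<theta>/2) \<noteq> 0 \<longrightarrow>
             poly p (complex_of_real (cos \<theta>)) = complex_of_real (sin ((real s + 1/2) * \<theta>) / sin (\<theta>/2))"
    show "p = jp s"
    proof (rule poly_eq_on_cos)
      fix t assume t: "t \<in> {0<..<pi}"
      then have "sin (t/2) > 0" by (intro sin_gt_zero) auto
      then show "poly p (complex_of_real (cos t)) = poly (jp s) (complex_of_real (cos t))"
        using h jp_cos by force
    qed
  qed
  then show ?thesis unfolding jac_poly_def by simp
qed

definition LT :: "(nat \<Rightarrow> nat \<Rightarrow> real) \<Rightarrow> bool" where
  "LT M \<longleftrightarrow> (\<forall>x z. x < z \<longrightarrow> M x z = 0)"

lemma mconv_fin: assumes "LT f" shows "mconv f g x y = (\<Sum>z\<le>x. f x z * g z y)"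
proof -
  have "mconv f g x y = infsum (\<lambda>z. f x z * g z y) {..x}"
    unfolding mconv_def by (rule infsum_cong_neutral) (use assms in \<open>auto simp: LT_def\<close>)
  then show ?thesis by simp
qed

lemma LT_mconv: assumes "LT f" "LT g" shows "LT (mconv f g)"
  unfolding LT_def
proof (intro allI impI)
  fix x z :: nat assume "x < z"
  then show "mconv f g x z = 0" unfolding mconv_fin[OF assms(1)]
    using assms(2) by (auto simp: LT_def intro!: sum.neutral)
qed

lemma LT_T: "LT matT" by (auto simp: LT_def matT_def)
lemma LT_Phi: "LT matPhi" by (auto simp: LT_def matPhi_def)
lemma LT_id: "LT midentity" by (auto simp: LT_def midentity_def)
lemma LT_mpow: "LT f \<Longrightarrow> LT (mpow f n)"
  by (induction n) (auto intro: LT_mconv LT_id)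

definition comb :: "(nat \<Rightarrow> complex poly) \<Rightarrow> (nat \<Rightarrow> nat \<Rightarrow> real) \<Rightarrow> nat \<Rightarrow> complex poly" where
  "comb B M s = (\<Sum>k\<le>s. smult (complex_of_real (M s k)) (B k))"

lemma ex_comb: "ex = comb cheb" by (auto simp: fun_eq_iff ex_def comb_def)

definition ey :: "(nat \<Rightarrow> nat \<Rightarrow> real) \<Rightarrow> nat \<Rightarrow> complex poly" where
  "ey = comb jp"

lemma comb_id: "comb B midentity s = B s"
proof -
  have "comb B midentity s = (\<Sum>k\<in>{s}. smult (complex_of_real (midentity s k)) (B k))"
    unfolding comb_def by (rule sum.mono_neutral_right) (auto simp: midentity_def)
  then show ?thesis by (simp add: midentity_def)
qed

lemma smult_sumR: "smult c (\<Sum>i\<in>A. f i) = (\<Sum>i\<in>A. smult c (f i))"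
  by (induction A rule: infinite_finite_induct) (auto simp: smult_add_right)

lemma comb_comp:
  assumes "LT M" "LT N"
  shows "(\<Sum>k\<le>s. smult (complex_of_real (M s k)) (comb B N k)) = comb B (mconv M N) s"
proof -
  have "(\<Sum>k\<le>s. smult (complex_of_real (M s k)) (comb B N k))
      = (\<Sum>k\<le>s. \<Sum>j\<le>s. smult (complex_of_real (M s k * N k j)) (B j))"
  proof (rule sum.cong[OF refl])
    fix k assume k: "k \<in> {..s}"
    have "comb B N k = (\<Sum>j\<le>s. smult (complex_of_real (N k j)) (B j))"
      unfolding comb_def by (rule sum.mono_neutral_left) (use k assms(2) in \<open>auto simp: LT_def\<close>)
    then show "smult (complex_of_real (M s k)) (comb B N k) = (\<Sum>j\<le>s. smult (complex_of_real (M s k * N k j)) (B j))"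
      by (simp add: smult_sumR smult_smult)
  qed
  also have "\<dots> = (\<Sum>j\<le>s. \<Sum>k\<le>s. smult (complex_of_real (M s k * N k j)) (B j))"
    by (rule sum.swap)
  also have "\<dots> = (\<Sum>j\<le>s. smult (complex_of_real (mconv M N s j)) (B j))"
    by (rule sum.cong[OF refl]) (simp add: mconv_fin[OF assms(1)] smult_sum[symmetric] of_real_sum)
  finally show ?thesis unfolding comb_def .
qed

lemma sdiv_char:
  assumes "p = [:-1, 1:] * q + [:r:]"
  shows "synthetic_div p (1::complex) = q"
proof -
  have "p + smult 1 q = pCons r q" unfolding assms
    by (simp add: mult_pCons_left algebra_simps)
  from synthetic_div_unique[OF this] show ?thesis by simp
qed

lemma sdiv_add: "synthetic_div (p + q) (1::complex) = synthetic_div p 1 + synthetic_div q 1"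
proof (rule sdiv_char[where r="poly p 1 + poly q 1"])
  have hp: "[:-1, 1:] * synthetic_div p 1 + [:poly p 1:] = p" using synthetic_div_correct'[of 1 p] by simp
  have hq: "[:-1, 1:] * synthetic_div q 1 + [:poly q 1:] = q" using synthetic_div_correct'[of 1 q] by simp
  show "p + q = [:-1, 1:] * (synthetic_div p 1 + synthetic_div q 1) + [:poly p 1 + poly q 1:]"
    by (subst hp[symmetric], subst hq[symmetric]) (simp add: algebra_simps)
qed

lemma sdiv_smult: "synthetic_div (smult c p) (1::complex) = smult c (synthetic_div p 1)"
proof (rule sdiv_char[where r="c * poly p 1"])
  have hp: "[:-1, 1:] * synthetic_div p 1 + [:poly p 1:] = p" using synthetic_div_correct'[of 1 p] by simp
  show "smult c p = [:-1, 1:] * smult c (synthetic_div p 1) + [:c * poly p 1:]"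
  proof -
    have "smult c p = smult c ([:-1, 1:] * synthetic_div p 1 + [:poly p 1:])" using hp by simp
    also have "\<dots> = [:-1, 1:] * smult c (synthetic_div p 1) + [:c * poly p 1:]"
      by (simp only: smult_add_right mult_smult_right) simp
    finally show ?thesis .
  qed
qed

lemma sdiv_sum: "synthetic_div (\<Sum>k\<in>A. f k) (1::complex) = (\<Sum>k\<in>A. synthetic_div (f k) 1)"
  by (induction A rule: infinite_finite_induct) (auto simp: sdiv_add)

lemma sdiv_comb: "synthetic_div (comb B M s) (1::complex) = (\<Sum>k\<le>s. smult (complex_of_real (M s k)) (synthetic_div (B k) 1))"
  unfolding comb_def sdiv_sum sdiv_smult ..

lemma cos_step:
  assumes "sin (t/2) \<noteq> 0"
  shows "(cos t - 1) * (sin ((real k + 1/2) * t) / sin (t/2)) = cos (real (Suc k) * t) - cos (real k * t)"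
proof -
  have c: "cos t = 1 - 2 * (sin (t/2))^2" using cos_double_sin[of "t/2"] by simp
  have a: "real (Suc k) * t = (real k + 1/2) * t + t/2" by (simp add: algebra_simps)
  have b: "real k * t = (real k + 1/2) * t - t/2" by (simp add: algebra_simps)
  show ?thesis unfolding a unfolding b cos_add cos_diff c using assms
    by (simp add: field_simps power2_eq_square)
qed

lemma sdiv_cheb: "synthetic_div (cheb s) 1 = ey matPhi s"
proof (rule sdiv_char[where r=1], rule poly_eq_on_cos)
  fix t :: real assume t: "t \<in> {0<..<pi}"
  then have st: "sin (t/2) \<noteq> 0" using sin_gt_zero[of "t/2"] by auto
  have "poly ([:-1, 1:] * ey matPhi s + [:1:]) (complex_of_real (cos t))
      = complex_of_real ((cos t - 1) * (\<Sum>k<s. sin ((real k + 1/2) * t) / sin (t/2)) + 1)"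
  proof -
    have "poly (ey matPhi s) (complex_of_real (cos t)) = (\<Sum>k\<le>s. complex_of_real (matPhi s k) * poly (jp k) (complex_of_real (cos t)))"
      unfolding ey_def comb_def by (simp add: poly_sum)
    also have "\<dots> = (\<Sum>k<s. poly (jp k) (complex_of_real (cos t)))"
      by (rule sum.mono_neutral_cong_right) (auto simp: matPhi_def)
    also have "\<dots> = complex_of_real (\<Sum>k<s. sin ((real k + 1/2) * t) / sin (t/2))"
      using jp_cos[OF st] by simp
    finally show ?thesis by (simp add: algebra_simps)
  qed
  also have "(cos t - 1) * (\<Sum>k<s. sin ((real k + 1/2) * t) / sin (t/2)) = (\<Sum>k<s. cos (real (Suc k) * t) - cos (real k * t))"
    unfolding sum_distrib_left using cos_step[OF st] by simp
  also have "\<dots> = cos (real s * t) - 1"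
    by (subst sum_lessThan_telescope) simp
  finally show "poly (cheb s) (complex_of_real (cos t)) = poly ([:-1, 1:] * ey matPhi s + [:1:]) (complex_of_real (cos t))"
    by (simp add: cheb_cos)
qed

lemma sdiv_jp: "synthetic_div (jp k) 1 = ey (mconv matT matPhi) k"
proof -
  have "synthetic_div (jp k) 1 = (\<Sum>j\<le>k. smult (complex_of_real (matT k j)) (ey matPhi j))"
    unfolding jp_def ex_comb sdiv_comb sdiv_cheb ..
  also have "\<dots> = ey (mconv matT matPhi) k"
    unfolding ey_def by (rule comb_comp[OF LT_T LT_Phi])
  finally show ?thesis .
qed

lemma sdiv_ey: assumes "LT M" shows "synthetic_div (ey M s) 1 = ey (mconv M (mconv matT matPhi)) s"
proof -
  have "synthetic_div (ey M s) 1 = (\<Sum>k\<le>s. smult (complex_of_real (M s k)) (ey (mconv matT matPhi) k))"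
    unfolding ey_def sdiv_comb sdiv_jp[unfolded ey_def] ..
  also have "\<dots> = ey (mconv M (mconv matT matPhi)) s"
    unfolding ey_def by (rule comb_comp[OF assms LT_mconv[OF LT_T LT_Phi]])
  finally show ?thesis .
qed

lemma ey_ex: assumes "LT M" shows "ey M s = ex (mconv M matT) s"
proof -
  have "ey M s = (\<Sum>k\<le>s. smult (complex_of_real (M s k)) (ex matT k))"
    unfolding ey_def comb_def jp_def ..
  also have "\<dots> = ex (mconv M matT) s"
    unfolding ex_comb by (rule comb_comp[OF assms LT_T])
  finally show ?thesis .
qed

lemma sdiv_ex1: assumes "LT M" shows "synthetic_div (ex M s) 1 = ey (mconv M matPhi) s"
proof -
  have "synthetic_div (ex M s) 1 = (\<Sum>k\<le>s. smult (complex_of_real (M s k)) (ey matPhi k))"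
    unfolding ex_comb sdiv_comb sdiv_cheb ..
  also have "\<dots> = ey (mconv M matPhi) s"
    unfolding ey_def by (rule comb_comp[OF assms LT_Phi])
  finally show ?thesis .
qed

lemma sdiv_ex2: assumes "LT M" shows "synthetic_div (ex M s) 1 = ex (mconv M (mconv matPhi matT)) s"
proof -
  have "synthetic_div (ex M s) 1 = (\<Sum>k\<le>s. smult (complex_of_real (M s k)) (ex (mconv matPhi matT) k))"
    unfolding ex_comb sdiv_comb sdiv_cheb ey_ex[OF LT_Phi, unfolded ex_comb] ..
  also have "\<dots> = ex (mconv M (mconv matPhi matT)) s"
    unfolding ex_comb by (rule comb_comp[OF assms LT_mconv[OF LT_Phi LT_T]])
  finally show ?thesis .
qed

abbreviation "TP \<equiv> mconv matT matPhi"
abbreviation "PT \<equiv> mconv matPhi matT"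

lemma pow_jp: "((\<lambda>p. synthetic_div p 1) ^^ m) (jp s) = ey (mpow TP m) s"
proof (induction m)
  case 0 then show ?case by (simp add: ey_def comb_id)
next
  case (Suc m)
  then show ?case using sdiv_ey[OF LT_mpow[OF LT_mconv[OF LT_T LT_Phi]]] by simp
qed

lemma pow_cheb: "((\<lambda>p. synthetic_div p 1) ^^ m) (cheb s) = ex (mpow PT m) s"
proof (induction m)
  case 0 then show ?case by (simp add: ex_comb comb_id)
next
  case (Suc m)
  then show ?case using sdiv_ex2[OF LT_mpow[OF LT_mconv[OF LT_Phi LT_T]]] by simp
qed

lemma pow_cheb': assumes "m \<ge> 1"
  shows "((\<lambda>p. synthetic_div p 1) ^^ m) (cheb s) = ey (mconv (mpow PT (m - 1)) matPhi) s"
proof -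
  obtain k where m: "m = Suc k" using assms by (cases m) auto
  show ?thesis unfolding m using pow_cheb[of k s] sdiv_ex1[OF LT_mpow[OF LT_mconv[OF LT_Phi LT_T]]] by simp
qed

lemma base_int:
  "((\<lambda>x. cos (real j * arccos x) / sqrt (1 - x\<^sup>2)) has_integral (if j = 0 then pi else 0)) {-1..1}"
proof -
  define F where "F x = (if j = 0 then - arccos x else - sin (real j * arccos x) / real j)" for x
  have "((\<lambda>x. cos (real j * arccos x) / sqrt (1 - x\<^sup>2)) has_integral (F 1 - F (-1))) {-1..1}"
  proof (rule fundamental_theorem_of_calculus_interior)
    show "continuous_on {-1..1} F" unfolding F_def
      by (cases "j = 0") (auto intro!: continuous_intros)
  next
    fix x :: real assume x: "x \<in> {-1<..<1}"
    have d: "DERIV arccos x :> inverse (- sqrt (1 - x\<^sup>2))" using x by (intro DERIV_arccos) auto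
    have sq: "sqrt (1 - x\<^sup>2) \<noteq> 0" proof -
      have "x\<^sup>2 < 1" using x by (simp add: abs_square_less_1 abs_less_iff)
      then show ?thesis by simp
    qed
    have "(F has_real_derivative cos (real j * arccos x) / sqrt (1 - x\<^sup>2)) (at x)"
    proof (cases "j = 0")
      case True
      then show ?thesis unfolding F_def using DERIV_minus[OF d] sq by (simp add: divide_inverse)
    next
      case False
      have "((\<lambda>x. - sin (real j * arccos x) / real j) has_real_derivative
             - (cos (real j * arccos x) * (real j * inverse (- sqrt (1 - x\<^sup>2)))) / real j) (at x)"
      proof -
        have d2: "((\<lambda>x. real j * arccos x) has_real_derivative real j * inverse (- sqrt (1 - x\<^sup>2))) (at x)"
          by (rule DERIV_cmult[OF d])
        note d3 = DERIV_fun_sin[OF d2]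
        from DERIV_cdivide[OF DERIV_minus[OF d3], of "real j"] show ?thesis by simp
      qed
      then show ?thesis unfolding F_def using False sq by (simp add: field_simps)
    qed
    then show "(F has_vector_derivative cos (real j * arccos x) / sqrt (1 - x\<^sup>2)) (at x)"
      by (simp add: has_real_derivative_iff_has_vector_derivative)
  qed simp
  moreover have "F 1 - F (-1) = (if j = 0 then pi else 0)"
    unfolding F_def by (simp add: mult.commute)
  ultimately show ?thesis by simp
qed

definition dst :: "nat \<Rightarrow> nat \<Rightarrow> nat" where "dst a b = (if a \<le> b then b - a else a - b)"

lemma cos_dst: "cos (real (dst a b) * t) = cos ((real a - real b) * t)"
proof (cases "a \<le> b")
  case True
  then have "real (dst a b) * t = - ((real a - real b) * t)" by (simp add: dst_def of_nat_diff algebra_simps)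
  then show ?thesis by simp
next
  case False
  then show ?thesis by (simp add: dst_def of_nat_diff algebra_simps)
qed

lemma termA:
  "((\<lambda>x. cos (real s1 * arccos x) * cos (real k * arccos x) / sqrt (1 - x\<^sup>2)) has_integral
      (if k = s1 then pi / Wt (-1/2) s1 else 0)) {-1..1}"
proof -
  have h: "((\<lambda>x. (cos (real (s1 + k) * arccos x) / sqrt (1 - x\<^sup>2) + cos (real (dst s1 k) * arccos x) / sqrt (1 - x\<^sup>2)) / 2)
      has_integral (((if s1 + k = 0 then pi else 0) + (if dst s1 k = 0 then pi else 0)) / 2)) {-1..1}"
    by (intro has_integral_divide has_integral_add base_int)
  have e: "(cos (real (s1 + k) * arccos x) / sqrt (1 - x\<^sup>2) + cos (real (dst s1 k) * arccos x) / sqrt (1 - x\<^sup>2)) / 2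
      = cos (real s1 * arccos x) * cos (real k * arccos x) / sqrt (1 - x\<^sup>2)" for x
  proof -
    have a: "real (s1 + k) * arccos x = real s1 * arccos x + real k * arccos x" by (simp add: algebra_simps)
    show ?thesis unfolding a cos_add cos_dst[of s1 k] by (simp add: left_diff_distrib cos_diff add_divide_distrib[symmetric])
  qed
  have v: "((if s1 + k = 0 then pi else 0) + (if dst s1 k = 0 then pi else 0)) / 2 = (if k = s1 then pi / Wt (-1/2) s1 else 0)"
    by (auto simp: dst_def Wt_def)
  show ?thesis using h unfolding e v .
qed

lemma termB:
  "((\<lambda>x. 2 * sin ((real s1 + 1/2) * arccos x) * sin ((real k + 1/2) * arccos x) / sqrt (1 - x\<^sup>2)) has_integral
      (if k = s1 then pi else 0)) {-1..1}"
proof -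
  have h: "((\<lambda>x. cos (real (dst s1 k) * arccos x) / sqrt (1 - x\<^sup>2) - cos (real (s1 + k + 1) * arccos x) / sqrt (1 - x\<^sup>2))
      has_integral ((if dst s1 k = 0 then pi else 0) - (if s1 + k + 1 = 0 then pi else 0))) {-1..1}"
    by (intro has_integral_diff base_int)
  have e: "cos (real (dst s1 k) * arccos x) / sqrt (1 - x\<^sup>2) - cos (real (s1 + k + 1) * arccos x) / sqrt (1 - x\<^sup>2)
      = 2 * sin ((real s1 + 1/2) * arccos x) * sin ((real k + 1/2) * arccos x) / sqrt (1 - x\<^sup>2)" for x
  proof -
    define A where "A = (real s1 + 1/2) * arccos x"
    define B where "B = (real k + 1/2) * arccos x"
    have a: "real (s1 + k + 1) * arccos x = A + B" by (simp add: A_def B_def algebra_simps)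
    have b: "(real s1 - real k) * arccos x = A - B" by (simp add: A_def B_def algebra_simps)
    show ?thesis unfolding a cos_dst b cos_add cos_diff A_def[symmetric] B_def[symmetric]
      by (simp add: diff_divide_distrib[symmetric])
  qed
  have v: "(if dst s1 k = 0 then pi else 0) - (if s1 + k + 1 = 0 then pi else 0) = (if k = s1 then pi else 0)"
    by (auto simp: dst_def)
  show ?thesis using h unfolding e v .
qed

lemma powr_mhalf: "y > 0 \<Longrightarrow> y powr (-1/2) = 1 / sqrt y"
proof -
  assume y: "y > 0"
  have e: "(-1/2::real) = - (1/2)" by simp
  have "y powr (-1/2) = inverse (y powr (1/2))" unfolding e by (rule powr_minus)
  also have "\<dots> = inverse (sqrt y)" using y by (simp only: powr_half_sqrt less_imp_le)
  also have "\<dots> = 1 / sqrt y" by (rule inverse_eq_divide)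
  finally show ?thesis .
qed

lemma sqrt_prod: "x \<in> {-1<..<1} \<Longrightarrow> sqrt (1 - x) * sqrt (1 + x) = sqrt (1 - x\<^sup>2)"
  by (simp add: real_sqrt_mult[symmetric] power2_eq_square algebra_simps)

lemma wA: assumes "x \<in> {-1<..<1::real}"
  shows "(1 - x) powr (-1/2) * (1 + x) powr (-1/2) = 1 / sqrt (1 - x\<^sup>2)"
proof -
  have a: "(1 - x) powr (-1/2) = 1 / sqrt (1 - x)" by (rule powr_mhalf) (use assms in auto)
  have b: "(1 + x) powr (-1/2) = 1 / sqrt (1 + x)" by (rule powr_mhalf) (use assms in auto)
  show ?thesis unfolding a b sqrt_prod[OF assms, symmetric] by simp
qed

lemma wB: assumes "x \<in> {-1<..<1::real}"
  shows "(1 - x) powr (1/2) * (1 + x) powr (-1/2) = 2 * (sin (arccos x / 2))\<^sup>2 / sqrt (1 - x\<^sup>2)"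
proof -
  have c: "2 * (sin (arccos x / 2))\<^sup>2 = 1 - x"
    using cos_double_sin[of "arccos x / 2"] assms by (simp add: cos_arccos)
  have p: "sqrt (1 + x) > 0" "sqrt (1 - x) > 0" using assms by auto
  have "(1 - x) powr (1/2) * (1 + x) powr (-1/2) = sqrt (1 - x) / sqrt (1 + x)"
  proof -
    have b: "(1 + x) powr (-1/2) = 1 / sqrt (1 + x)" by (rule powr_mhalf) (use assms in auto)
    have a: "(1 - x) powr (1/2) = sqrt (1 - x)" by (rule powr_half_sqrt) (use assms in auto)
    show ?thesis unfolding a b by simp
  qed
  also have "\<dots> = (1 - x) / sqrt (1 - x\<^sup>2)"
  proof -
    have q: "sqrt (1 - x) * sqrt (1 - x) = 1 - x" using assms by simp
    show ?thesis unfolding sqrt_prod[OF assms, symmetric] using p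
      by (simp add: divide_simps q)
  qed
  finally show ?thesis unfolding c .
qed

lemma Q1:
  assumes "LT C"
  shows "((\<lambda>x. poly (cheb s1) (complex_of_real x) * poly (ex C s2) (complex_of_real x) *
             complex_of_real ((1 - x) powr (-1/2) * (1 + x) powr (-1/2))) has_integral
          complex_of_real (pi / Wt (-1/2) s1 * C s2 s1)) {-1..1}"
proof -
  have r: "((\<lambda>x. \<Sum>k\<le>s2. C s2 k * (cos (real s1 * arccos x) * cos (real k * arccos x) / sqrt (1 - x\<^sup>2)))
      has_integral (\<Sum>k\<le>s2. C s2 k * (if k = s1 then pi / Wt (-1/2) s1 else 0))) {-1..1}"
    by (intro has_integral_sum has_integral_mult_right termA) auto
  have v: "(\<Sum>k\<le>s2. C s2 k * (if k = s1 then pi / Wt (-1/2) s1 else 0)) = pi / Wt (-1/2) s1 * C s2 s1"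
  proof -
    have "(\<Sum>k\<le>s2. C s2 k * (if k = s1 then pi / Wt (-1/2) s1 else 0)) = (\<Sum>k\<le>s2. if k = s1 then C s2 k * (pi / Wt (-1/2) s1) else 0)"
      by (rule sum.cong) auto
    also have "\<dots> = (if s1 \<in> {..s2} then C s2 s1 * (pi / Wt (-1/2) s1) else 0)"
      by (rule sum.delta) simp
    finally show ?thesis using assms by (auto simp: LT_def)
  qed
  have c: "((\<lambda>x. complex_of_real (\<Sum>k\<le>s2. C s2 k * (cos (real s1 * arccos x) * cos (real k * arccos x) / sqrt (1 - x\<^sup>2))))
      has_integral complex_of_real (pi / Wt (-1/2) s1 * C s2 s1)) {-1..1}"
    using has_integral_of_real[OF r] unfolding v .
  show ?thesis
  proof (rule has_integral_spike_finite[OF _ _ c, of "{-1, 1}"])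
    fix x :: real assume x: "x \<in> {-1..1} - {-1, 1}"
    then have x': "x \<in> {-1<..<1}" by auto
    have ch: "poly (cheb j) (complex_of_real x) = complex_of_real (cos (real j * arccos x))" for j
      using cheb_cos[of j "arccos x"] x' by (simp add: cos_arccos)
    show "poly (cheb s1) (complex_of_real x) * poly (ex C s2) (complex_of_real x) *
             complex_of_real ((1 - x) powr (-1/2) * (1 + x) powr (-1/2)) =
          complex_of_real (\<Sum>k\<le>s2. C s2 k * (cos (real s1 * arccos x) * cos (real k * arccos x) / sqrt (1 - x\<^sup>2)))"
    proof -
      define th where "th = arccos x"
      have s: "(\<Sum>k\<le>s2. complex_of_real (C s2 k) * complex_of_real (cos (real k * th))) =
               complex_of_real (\<Sum>k\<le>s2. C s2 k * cos (real k * th))" by simp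
      have r: "cos (real s1 * th) * (\<Sum>k\<le>s2. C s2 k * cos (real k * th)) * (1 / sqrt (1 - x\<^sup>2)) =
               (\<Sum>k\<le>s2. C s2 k * (cos (real s1 * th) * cos (real k * th) / sqrt (1 - x\<^sup>2)))"
        unfolding sum_distrib_left sum_distrib_right by (rule sum.cong) auto
      have "poly (cheb s1) (complex_of_real x) * poly (ex C s2) (complex_of_real x) *
             complex_of_real ((1 - x) powr (-1/2) * (1 + x) powr (-1/2)) = 
            complex_of_real (cos (real s1 * th)) * complex_of_real (\<Sum>k\<le>s2. C s2 k * cos (real k * th)) * complex_of_real (1 / sqrt (1 - x\<^sup>2))"
        unfolding poly_ex ch wA[OF x'] th_def[symmetric] s ..
      also have "\<dots> = complex_of_real (cos (real s1 * th) * (\<Sum>k\<le>s2. C s2 k * cos (real k * th)) * (1 / sqrt (1 - x\<^sup>2)))"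
        by (simp only: of_real_mult)
      also have "\<dots> = complex_of_real (\<Sum>k\<le>s2. C s2 k * (cos (real s1 * th) * cos (real k * th) / sqrt (1 - x\<^sup>2)))"
        unfolding r ..
      finally show ?thesis unfolding th_def .
    qed
  next
    show "finite {-1, 1::real}" by simp
  qed
qed

lemma Q2:
  assumes "LT C"
  shows "((\<lambda>x. poly (jp s1) (complex_of_real x) * poly (ey C s2) (complex_of_real x) *
             complex_of_real ((1 - x) powr (1/2) * (1 + x) powr (-1/2))) has_integral
          complex_of_real (pi * C s2 s1)) {-1..1}"
proof -
  define G where "G k x = 2 * sin ((real s1 + 1/2) * arccos x) * sin ((real k + 1/2) * arccos x) / sqrt (1 - x\<^sup>2)" for k x
  have r: "((\<lambda>x. \<Sum>k\<le>s2. C s2 k * G k x)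
      has_integral (\<Sum>k\<le>s2. C s2 k * (if k = s1 then pi else 0))) {-1..1}"
    unfolding G_def by (intro has_integral_sum has_integral_mult_right termB) auto
  have v: "(\<Sum>k\<le>s2. C s2 k * (if k = s1 then pi else 0)) = pi * C s2 s1"
  proof -
    have "(\<Sum>k\<le>s2. C s2 k * (if k = s1 then pi else 0)) = (\<Sum>k\<le>s2. if k = s1 then C s2 k * pi else 0)"
      by (rule sum.cong) auto
    also have "\<dots> = (if s1 \<in> {..s2} then C s2 s1 * pi else 0)"
      by (rule sum.delta) simp
    finally show ?thesis using assms by (auto simp: LT_def)
  qed
  have c: "((\<lambda>x. complex_of_real (\<Sum>k\<le>s2. C s2 k * G k x))
      has_integral complex_of_real (pi * C s2 s1)) {-1..1}"
    using has_integral_of_real[OF r] unfolding v .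
  show ?thesis
  proof (rule has_integral_spike_finite[OF _ _ c, of "{-1, 1}"])
    fix x :: real assume x: "x \<in> {-1..1} - {-1, 1}"
    then have x': "x \<in> {-1<..<1}" by auto
    define th where "th = arccos x"
    have thr: "th \<in> {0<..<pi}" unfolding th_def using x' arccos_lt_bounded by auto
    then have S: "sin (th/2) > 0" by (intro sin_gt_zero) auto
    have cx: "cos th = x" unfolding th_def using x' by (simp add: cos_arccos)
    have ch: "poly (jp j) (complex_of_real x) = complex_of_real (sin ((real j + 1/2) * th) / sin (th/2))" for j
      using jp_cos[of th j] S cx by simp
    define Sn where "Sn = sin (th/2)"
    define q where "q = sqrt (1 - x\<^sup>2)"
    have s: "(\<Sum>k\<le>s2. complex_of_real (C s2 k) * complex_of_real (sin ((real k + 1/2) * th) / Sn)) =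
               complex_of_real (\<Sum>k\<le>s2. C s2 k * (sin ((real k + 1/2) * th) / Sn))" by simp
    have r: "sin ((real s1 + 1/2) * th) / Sn * (\<Sum>k\<le>s2. C s2 k * (sin ((real k + 1/2) * th) / Sn)) * (2 * Sn\<^sup>2 / q) =
               (\<Sum>k\<le>s2. C s2 k * G k x)"
      unfolding sum_distrib_left sum_distrib_right
    proof (rule sum.cong[OF refl])
      fix k assume "k \<in> {..s2}"
      have "Sn \<noteq> 0" using S Sn_def by simp
      then show "sin ((real s1 + 1/2) * th) / Sn * (C s2 k * (sin ((real k + 1/2) * th) / Sn)) * (2 * Sn\<^sup>2 / q) = C s2 k * G k x"
        unfolding G_def th_def[symmetric] q_def[symmetric] by (simp add: power2_eq_square)
    qed
    have "poly (jp s1) (complex_of_real x) * poly (ey C s2) (complex_of_real x) *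
             complex_of_real ((1 - x) powr (1/2) * (1 + x) powr (-1/2)) =
          complex_of_real (sin ((real s1 + 1/2) * th) / Sn) * complex_of_real (\<Sum>k\<le>s2. C s2 k * (sin ((real k + 1/2) * th) / Sn)) * complex_of_real (2 * Sn\<^sup>2 / q)"
      unfolding ey_def comb_def poly_sum poly_smult ch wB[OF x'] th_def[symmetric] Sn_def[symmetric] q_def[symmetric] s[symmetric] by simp
    also have "\<dots> = complex_of_real (sin ((real s1 + 1/2) * th) / Sn * (\<Sum>k\<le>s2. C s2 k * (sin ((real k + 1/2) * th) / Sn)) * (2 * Sn\<^sup>2 / q))"
      by (simp only: of_real_mult)
    also have "\<dots> = complex_of_real (\<Sum>k\<le>s2. C s2 k * G k x)"
      unfolding r by (rule refl)
    finally show "poly (jp s1) (complex_of_real x) * poly (ey C s2) (complex_of_real x) *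
             complex_of_real ((1 - x) powr (1/2) * (1 + x) powr (-1/2)) = complex_of_real (\<Sum>k\<le>s2. C s2 k * G k x)" .
  next
    show "finite {-1, 1::real}" by simp
  qed
qed

lemma Gam_eval:
  assumes g: "good_loop \<gamma>" and n: "n1 \<le> n2"
    and I: "((\<lambda>x. poly (jac_poly a1 s1) (complex_of_real x) *
                 poly ((sdiv1 ^^ (n2 - n1)) (jac_poly a2 s2)) (complex_of_real x) *
                 complex_of_real ((1 - x) powr a1 * (1 + x) powr (-1/2))) has_integral I) {-1..1}"
  shows "Gam \<gamma> n1 a1 s1 n2 a2 s2 = complex_of_real (Wt a1 s1 / pi) * I"
proof -
  define m where "m = n2 - n1"
  have e: "int n1 - int n2 = - int m" unfolding m_def using n by simp
  define q where "q = jac_poly a2 s2"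
  define F where "F x = poly (jac_poly a1 s1) (complex_of_real x) *
                 poly ((sdiv1 ^^ m) q) (complex_of_real x) *
                 complex_of_real ((1 - x) powr a1 * (1 + x) powr (-1/2))" for x
  have inner: "contour_integral \<gamma> (\<lambda>u. J a1 s1 (complex_of_real x) * J a2 s2 u * (u - 1) powi (int n1 - int n2) *
        complex_of_real ((1 - x) powr a1 * (1 + x) powr (-1/2)) / (complex_of_real x - u)) = -(2*pi*\<i>) * F x"
    if x: "x \<in> {-1..1} - {-1, 1}" for x
  proof -
    have x': "x \<in> {-1..<1}" using x by auto
    define c where "c = J a1 s1 (complex_of_real x) * complex_of_real ((1 - x) powr a1 * (1 + x) powr (-1/2))"
    have h: "((\<lambda>u. c * (poly q u * (u - 1) powi (-int m) / (complex_of_real x - u))) has_contour_integral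
           c * (-(2*pi*\<i>) * poly ((sdiv1 ^^ m) q) (complex_of_real x))) \<gamma>"
      by (rule has_contour_integral_lmul[OF ci_M[OF g x']])
    have h2: "((\<lambda>u. J a1 s1 (complex_of_real x) * J a2 s2 u * (u - 1) powi (int n1 - int n2) *
        complex_of_real ((1 - x) powr a1 * (1 + x) powr (-1/2)) / (complex_of_real x - u)) has_contour_integral
           c * (-(2*pi*\<i>) * poly ((sdiv1 ^^ m) q) (complex_of_real x))) \<gamma>"
      by (rule has_contour_integral_eq[OF h]) (simp add: c_def q_def J_def e mult_ac)
    note ci = contour_integral_unique[OF h2]
    show ?thesis unfolding ci unfolding c_def F_def J_def by (simp add: mult_ac)
  qed
  have int: "integral {-1..1} (\<lambda>x. contour_integral \<gamma> (\<lambda>u. J a1 s1 (complex_of_real x) * J a2 s2 u * (u - 1) powi (int n1 - int n2) *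
        complex_of_real ((1 - x) powr a1 * (1 + x) powr (-1/2)) / (complex_of_real x - u))) = -(2*pi*\<i>) * I"
  proof (rule integral_unique, rule has_integral_spike_finite[of "{-1, 1}"])
    show "finite {-1, 1::real}" by simp
    show "((\<lambda>x. -(2*pi*\<i>) * F x) has_integral -(2*pi*\<i>) * I) {-1..1}"
      by (rule has_integral_mult_right) (use I in \<open>simp add: F_def m_def q_def\<close>)
  qed (use inner in auto)
  show ?thesis unfolding Gam_def int by (simp add: field_simps)
qed

lemma Wt_pos: "Wt a s > 0" by (simp add: Wt_def)

theorem proposition4p7:
  fixes s1 s2 n1 n2 :: nat and \<gamma> :: "real \<Rightarrow> complex"
  assumes "n1 \<ge> 1" and "n2 \<ge> 1" and "good_loop \<gamma>"
  shows "(n1 \<le> n2 \<longrightarrow>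
           complex_of_real (mconv (mpow (mconv matT matPhi) (n2 - n1)) matT s2 s1)
             = Gam \<gamma> n1 (-1/2) s1 n2 (1/2) s2)
       \<and> (n1 < n2 \<longrightarrow>
           complex_of_real (mpow (mconv matT matPhi) (n2 - n1) s2 s1)
             = Gam \<gamma> n1 (1/2) s1 n2 (1/2) s2)
       \<and> (n1 < n2 \<longrightarrow>
           complex_of_real (mconv (mpow (mconv matPhi matT) (n2 - n1 - 1)) matPhi s2 s1)
             = Gam \<gamma> n1 (1/2) s1 n2 (-1/2) s2)
       \<and> (n1 < n2 \<longrightarrow>
           complex_of_real (mpow (mconv matPhi matT) (n2 - n1) s2 s1)
             = Gam \<gamma> n1 (-1/2) s1 n2 (-1/2) s2)"
proof (intro conjI impI)
  have LTP: "LT TP" "LT PT" by (auto intro: LT_mconv LT_T LT_Phi)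
  have W: "Wt (1/2) s1 = 1" by (simp add: Wt_def)
  assume n: "n1 \<le> n2"
  {
    define C where "C = mconv (mpow TP (n2 - n1)) matT"
    have LC: "LT C" unfolding C_def by (intro LT_mconv LT_mpow LTP LT_T)
    have P: "(sdiv1 ^^ (n2 - n1)) (jac_poly (1/2) s2) = ex C s2"
      unfolding jac_jp pow_jp C_def by (rule ey_ex[OF LT_mpow[OF LTP(1)]])
    have "Gam \<gamma> n1 (-1/2) s1 n2 (1/2) s2 = complex_of_real (Wt (-1/2) s1 / pi) * complex_of_real (pi / Wt (- 1 / 2) s1 * C s2 s1)"
      by (rule Gam_eval[OF assms(3) n]) (unfold P, unfold jac_cheb, rule Q1[OF LC])
    also have "\<dots> = complex_of_real (C s2 s1)"
      using Wt_pos[of "-1/2" s1] by (simp only: of_real_mult[symmetric]) simp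
    finally show "complex_of_real (mconv (mpow (mconv matT matPhi) (n2 - n1)) matT s2 s1)
             = Gam \<gamma> n1 (-1/2) s1 n2 (1/2) s2" unfolding C_def by simp
  }
next
  have LTP: "LT TP" "LT PT" by (auto intro: LT_mconv LT_T LT_Phi)
  have W: "Wt (1/2) s1 = 1" by (simp add: Wt_def)
  assume n: "n1 < n2"
  then have n': "n1 \<le> n2" by simp
  {
    define C where "C = mpow TP (n2 - n1)"
    have LC: "LT C" unfolding C_def by (intro LT_mconv LT_mpow LTP LT_T)
    have P: "(sdiv1 ^^ (n2 - n1)) (jac_poly (1/2) s2) = ey C s2"
      unfolding jac_jp pow_jp C_def ..
    have "Gam \<gamma> n1 (1/2) s1 n2 (1/2) s2 = complex_of_real (Wt (1/2) s1 / pi) * complex_of_real (pi * C s2 s1)"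
      by (rule Gam_eval[OF assms(3) n']) (unfold P, unfold jac_jp, rule Q2[OF LC])
    also have "\<dots> = complex_of_real (C s2 s1)"
      unfolding W by (simp only: of_real_mult[symmetric]) simp
    finally show "complex_of_real (mpow (mconv matT matPhi) (n2 - n1) s2 s1)
             = Gam \<gamma> n1 (1/2) s1 n2 (1/2) s2" unfolding C_def by simp
  }
next
  have LTP: "LT TP" "LT PT" by (auto intro: LT_mconv LT_T LT_Phi)
  have W: "Wt (1/2) s1 = 1" by (simp add: Wt_def)
  assume n: "n1 < n2"
  then have n': "n1 \<le> n2" by simp
  {
    define C where "C = mconv (mpow PT (n2 - n1 - 1)) matPhi"
    have LC: "LT C" unfolding C_def by (intro LT_mconv LT_mpow LTP LT_Phi)
    have P: "(sdiv1 ^^ (n2 - n1)) (jac_poly (-1/2) s2) = ey C s2"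
      unfolding jac_cheb C_def by (rule pow_cheb') (use n in simp)
    have "Gam \<gamma> n1 (1/2) s1 n2 (-1/2) s2 = complex_of_real (Wt (1/2) s1 / pi) * complex_of_real (pi * C s2 s1)"
      by (rule Gam_eval[OF assms(3) n']) (unfold P, unfold jac_jp, rule Q2[OF LC])
    also have "\<dots> = complex_of_real (C s2 s1)"
      unfolding W by (simp only: of_real_mult[symmetric]) simp
    finally show "complex_of_real (mconv (mpow (mconv matPhi matT) (n2 - n1 - 1)) matPhi s2 s1)
             = Gam \<gamma> n1 (1/2) s1 n2 (-1/2) s2" unfolding C_def by simp
  }
next
  have LTP: "LT TP" "LT PT" by (auto intro: LT_mconv LT_T LT_Phi)
  assume n: "n1 < n2"
  then have n': "n1 \<le> n2" by simp
  {
    define C where "C = mpow PT (n2 - n1)"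
    have LC: "LT C" unfolding C_def by (intro LT_mconv LT_mpow LTP LT_Phi)
    have P: "(sdiv1 ^^ (n2 - n1)) (jac_poly (-1/2) s2) = ex C s2"
      unfolding jac_cheb C_def by (rule pow_cheb)
    have "Gam \<gamma> n1 (-1/2) s1 n2 (-1/2) s2 = complex_of_real (Wt (-1/2) s1 / pi) * complex_of_real (pi / Wt (- 1 / 2) s1 * C s2 s1)"
      by (rule Gam_eval[OF assms(3) n']) (unfold P, unfold jac_cheb, rule Q1[OF LC])
    also have "\<dots> = complex_of_real (C s2 s1)"
      using Wt_pos[of "-1/2" s1] by (simp only: of_real_mult[symmetric]) simp
    finally show "complex_of_real (mpow (mconv matPhi matT) (n2 - n1) s2 s1)
             = Gam \<gamma> n1 (-1/2) s1 n2 (-1/2) s2" unfolding C_def by simp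
  }
qed

end
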